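(* Let $X$ be a metric space, $K$ a reproducing kernel on $X$ with RKHS $\mathcal{H}_K$, $\Omega\subseteq X$ compact with $K$ continuous on $\Omega\times\Omega$, and $\mu$ a finite positive Borel measure on $\Omega$. Let $T$ be the positive compact operator on $\mathcal{H}_K$ given by $(Tf)(x)=\int_\Omega f(t)K(t,x)\,d\mu(t)$, let $e_1,\dots,e_n$ be orthonormal eigenfunctions of $T$ corresponding to its $n$ largest eigenvalues, assumed positive, and $\mathcal{S}_T:=\operatorname{span}\{e_1,\dots,e_n\}$. Let $\mathcal{X}=\{x_1,\dots,x_n\}\subseteq X$ with $K[\mathcal{X}]:=[K(x_j,x_k)]_{j,k=1}^n$ nonsingular, and $\mathcal{S}_{\mathcal{X}}:=\operatorname{span}\{K(x_j,\cdot):1\le j\le n\}$. Define $f_j:=\sum_{k=1}^n\overline{e_k(x_j)}\,e_k$ (the orthogonal projection of $K(x_j,\cdot)$ onto $\mathcal{S}_T$), $h_j:=K(x_j,\cdot)-f_j$, $\mathbf{A}:=[(f_k,f_j)_{\mathcal{H}_K}]_{j,k=1}^n$, $\mathbf{B}:=[(h_k,h_j)_{\mathcal{H}_K}]_{j,k=1}^n$, and $\mathbf{E}:=[e_k(x_j)]_{j,k=1}^n$. Assume $\mathbf{B}$ is nonsingular. If $\mathbf{E}$ is nonsingular, then $$\operatorname{dist}(\mathcal{S}_{\mathcal{X}},\mathcal{S}_T)=\sqrt{1-\frac{1}{\lambda_{\max}\big(K[\mathcal{X}]^T(\mathbf{E}\mathbf{E}^* )^{-1}\big)}},$$ where $\lambda_{\max}(M)$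 is the largest eigenvalue of $M$. If $\mathbf{E}$ is singular, then $\operatorname{dist}(\mathcal{S}_{\mathcal{X}},\mathcal{S}_T)\ge 1$.
   Context: The RKHS $\mathcal{H}_K$ satisfies $f(x)=(f,K(x,\cdot))_{\mathcal{H}_K}$ for all $f\in\mathcal{H}_K$, $x\in X$. For closed subspaces $U,V$ with orthogonal projections $P_U,P_V$, $\operatorname{dist}(U,V):=\|P_U-P_V\|$ (operator norm). $M^T$ is the transpose and $M^*$ the conjugate transpose of $M$. Note $\mathbf{A}=\mathbf{E}\mathbf{E}^*$ and $\mathbf{A}+\mathbf{B}=K[\mathcal{X}]^T$. *)

theory Defs
  imports "HOL-Analysis.Analysis"
begin

text \<open>An abstract inner product ip on a set H of such functions; conventions:
  ip is linear in the first and conjugate-linear in the second argument.\<close>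

definition hnorm :: "(('x \<Rightarrow> complex) \<Rightarrow> ('x \<Rightarrow> complex) \<Rightarrow> complex) \<Rightarrow> ('x \<Rightarrow> complex) \<Rightarrow> real" where
  "hnorm ip f = sqrt (Re (ip f f))"

definition rkhs :: "('x \<Rightarrow> complex) set \<Rightarrow> (('x \<Rightarrow> complex) \<Rightarrow> ('x \<Rightarrow> complex) \<Rightarrow> complex)
                    \<Rightarrow> ('x \<Rightarrow> 'x \<Rightarrow> complex) \<Rightarrow> bool" where
  "rkhs H ip K \<longleftrightarrow>
     (\<lambda>t. 0) \<in> H
   \<and> (\<forall>f\<in>H. \<forall>g\<in>H. (\<lambda>t. f t + g t) \<in> H)
   \<and> (\<forall>c. \<forall>f\<in>H. (\<lambda>t. c * f t) \<in> H)
   \<and> (\<forall>f\<in>H. \<forall>g\<in>H. \<forall>h\<in>H. ip (\<lambda>t. f t + g t) h = ip f h + ip g h)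
   \<and> (\<forall>c. \<forall>f\<in>H. \<forall>g\<in>H. ip (\<lambda>t. c * f t) g = c * ip f g)
   \<and> (\<forall>f\<in>H. \<forall>g\<in>H. ip g f = cnj (ip f g))
   \<and> (\<forall>f\<in>H. 0 \<le> Re (ip f f) \<and> (ip f f = 0 \<longrightarrow> f = (\<lambda>t. 0)))
   \<and> (\<forall>s. (\<forall>i. s i \<in> H) \<and> (\<forall>\<epsilon>>0. \<exists>N. \<forall>m\<ge>N. \<forall>k\<ge>N. hnorm ip (\<lambda>t. s m t - s k t) < \<epsilon>)
          \<longrightarrow> (\<exists>f\<in>H. (\<lambda>i. hnorm ip (\<lambda>t. s i t - f t)) \<longlonglongrightarrow> 0))
   \<and> (\<forall>x. K x \<in> H)
   \<and> (\<forall>f\<in>H. \<forall>x. f x = ip f (K x))"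

definition Top :: "'x measure \<Rightarrow> ('x \<Rightarrow> 'x \<Rightarrow> complex) \<Rightarrow> ('x \<Rightarrow> complex) \<Rightarrow> ('x \<Rightarrow> complex)" where
  "Top M K f = (\<lambda>x. integral\<^sup>L M (\<lambda>t. f t * K t x))"

definition fspan :: "('i::finite \<Rightarrow> 'x \<Rightarrow> complex) \<Rightarrow> ('x \<Rightarrow> complex) set" where
  "fspan g = {(\<lambda>t. \<Sum>i\<in>UNIV. c i * g i t) | c. True}"

definition hproj :: "(('x \<Rightarrow> complex) \<Rightarrow> ('x \<Rightarrow> complex) \<Rightarrow> complex) \<Rightarrow> ('x \<Rightarrow> complex) set
                     \<Rightarrow> ('x \<Rightarrow> complex) \<Rightarrow> ('x \<Rightarrow> complex)" where
  "hproj ip U f = (THE u. u \<in> U \<and> (\<forall>w\<in>U. ip (\<lambda>t. f t - u t) w = 0))"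

definition subdist :: "('x \<Rightarrow> complex) set \<Rightarrow> (('x \<Rightarrow> complex) \<Rightarrow> ('x \<Rightarrow> complex) \<Rightarrow> complex)
                       \<Rightarrow> ('x \<Rightarrow> complex) set \<Rightarrow> ('x \<Rightarrow> complex) set \<Rightarrow> real" where
  "subdist H ip U V = Sup {hnorm ip (\<lambda>t. hproj ip U f t - hproj ip V f t) | f. f \<in> H \<and> hnorm ip f \<le> 1}"

definition cnj_transpose :: "complex^'n^'m \<Rightarrow> complex^'m^'n" where
  "cnj_transpose M = (\<chi> i j. cnj (M $ j $ i))"

text \<open>Largest eigenvalue (the eigenvalues of the matrices in question are real).\<close>
definition lambda_max :: "complex^'n^'n \<Rightarrow> real" where
  "lambda_max M = Max {r::real. \<exists>v. v \<noteq> 0 \<and> M *v v = complex_of_real r *s v}"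

end

theory Submission
  imports Defs "HOL-Computational_Algebra.Polynomial"
begin

lemma inv_ker:
  fixes A :: "'a::field^'n^'n"
  assumes "invertible A" "A *v x = 0" shows "x = 0"
  using assms invertible_left_inverse matrix_left_invertible_ker by metis

lemma noninv_ker:
  fixes A :: "'a::field^'n^'n"
  assumes "\<not> invertible A" shows "\<exists>x. x \<noteq> 0 \<and> A *v x = 0"
  using assms invertible_left_inverse matrix_left_invertible_ker by metis

lemma matrix_inv_props:
  fixes A :: "'a::field^'n^'n"
  assumes "invertible A"
  shows "A ** matrix_inv A = mat 1" "matrix_inv A ** A = mat 1"
proof -
  have "\<exists>A'. A ** A' = mat 1 \<and> A' ** A = mat 1" using assms invertible_def by blast
  from someI_ex[OF this] show "A ** matrix_inv A = mat 1" "matrix_inv A ** A = mat 1"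
    unfolding matrix_inv_def by auto
qed

lemma invertible_matrix_inv:
  fixes A :: "'a::field^'n^'n"
  assumes "invertible A" shows "invertible (matrix_inv A)"
  using matrix_inv_props[OF assms] invertible_def by blast

lemma transpose_inv_field:
  fixes A :: "'a::field^'n^'n"
  assumes "invertible A" shows "invertible (transpose A)"
  by (meson assms invertible_def matrix_left_right_inverse right_invertible_transpose)

lemma cnj_transpose_mult:
  "cnj_transpose (X ** Y) = cnj_transpose Y ** cnj_transpose (X::complex^'n^'n)"
  unfolding cnj_transpose_def matrix_matrix_mult_def
  by (simp add: vec_eq_iff mult.commute)

lemma cnj_transpose_mat1: "cnj_transpose (mat 1 :: complex^'n^'n) = mat 1"
  unfolding cnj_transpose_def mat_def by (simp add: vec_eq_iff)

lemma cnj_transpose_inv: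
  fixes A :: "complex^'n^'n"
  assumes "invertible A" shows "invertible (cnj_transpose A)"
proof -
  obtain B where "A ** B = mat 1" "B ** A = mat 1" using assms invertible_def by blast
  then have "cnj_transpose A ** cnj_transpose B = mat 1" "cnj_transpose B ** cnj_transpose A = mat 1"
    by (metis cnj_transpose_mult cnj_transpose_mat1)+
  then show ?thesis using invertible_def by blast
qed

lemma cnj_transpose_noninv:
  fixes A :: "complex^'n^'n"
  assumes "\<not> invertible A" shows "\<not> invertible (cnj_transpose A)"
proof
  assume "invertible (cnj_transpose A)"
  then have "invertible (cnj_transpose (cnj_transpose A))" by (rule cnj_transpose_inv)
  moreover have "cnj_transpose (cnj_transpose A) = A" by (simp add: cnj_transpose_def vec_eq_iff)
  ultimately show False using assms by simp
qed

lemma poly_det: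
  fixes N :: "'a::comm_ring_1 poly^'n^'n"
  shows "poly (det N) z = det (\<chi> i j. poly (N$i$j) z)"
  unfolding det_def by (simp add: poly_sum poly_prod)

lemma eig_finite:
  fixes M :: "complex^'n^'n"
  assumes "invertible M"
  shows "finite {r::real. \<exists>v. v \<noteq> 0 \<and> M *v v = complex_of_real r *s v}"
proof -
  define N :: "complex poly^'n^'n" where
    "N = (\<chi> i j. [:M$i$j:] - (if i = j then [:0,1:] else 0))"
  have pN: "poly (det N) z = det (\<chi> i j. M$i$j - (if i = j then z else 0))" for z
    unfolding poly_det by (rule arg_cong[where f=det]) (simp add: N_def vec_eq_iff)
  have "(\<chi> i j. M$i$j - (if i = j then (0::complex) else 0)) = M" by (simp add: vec_eq_iff)
  then have "poly (det N) 0 \<noteq> 0" using pN[of 0] assms invertible_det_nz by metis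
  then have "det N \<noteq> 0" by auto
  then have fin: "finite {z. poly (det N) z = 0}" by (rule poly_roots_finite)
  have sub: "{r::real. \<exists>v. v \<noteq> 0 \<and> M *v v = complex_of_real r *s v}
      \<subseteq> complex_of_real -` {z. poly (det N) z = 0}"
  proof
    fix r assume "r \<in> {r::real. \<exists>v. v \<noteq> 0 \<and> M *v v = complex_of_real r *s v}"
    then obtain v where v: "v \<noteq> 0" "M *v v = complex_of_real r *s v" by auto
    let ?Z = "(\<chi> i j. M$i$j - (if i = j then complex_of_real r else 0))"
    have "(?Z *v v)$i = (M *v v)$i - complex_of_real r * v$i" for i
    proof -
      have "(?Z *v v)$i = (\<Sum>j\<in>UNIV. M$i$j * v$j - (if i = j then complex_of_real r * v$j else 0))"
        unfolding matrix_vector_mult_def by (auto intro!: sum.cong simp: left_diff_distrib)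
      also have "\<dots> = (M *v v)$i - complex_of_real r * v$i"
        by (simp add: sum_subtractf matrix_vector_mult_def)
      finally show ?thesis .
    qed
    then have "?Z *v v = M *v v - complex_of_real r *s v" by (simp add: vec_eq_iff)
    then have "?Z *v v = 0" using v by simp
    then have "\<not> invertible ?Z" using v inv_ker by blast
    then have "det ?Z = 0" using invertible_det_nz by blast
    then show "r \<in> complex_of_real -` {z. poly (det N) z = 0}" using pN by simp
  qed
  have "finite (complex_of_real -` {z. poly (det N) z = 0})"
    by (rule finite_vimageI[OF fin]) (simp add: inj_on_def)
  then show ?thesis using sub finite_subset by blast
qed



definition lin :: "('i::finite \<Rightarrow> 'x \<Rightarrow> complex) \<Rightarrow> ('i \<Rightarrow> complex) \<Rightarrow> 'x \<Rightarrow> complex" where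
  "lin g c = (\<lambda>t. \<Sum>i\<in>UNIV. c i * g i t)"

lemma fspan_lin: "fspan g = range (lin g)"
  unfolding fspan_def lin_def by auto

locale ipsp =
  fixes H :: "('x \<Rightarrow> complex) set" and ip
  assumes zero: "(\<lambda>t. 0) \<in> H"
    and add: "\<And>f g. f\<in>H \<Longrightarrow> g\<in>H \<Longrightarrow> (\<lambda>t. f t + g t) \<in> H"
    and scl: "\<And>c f. f\<in>H \<Longrightarrow> (\<lambda>t. c * f t) \<in> H"
    and ip_add: "\<And>f g h. f\<in>H \<Longrightarrow> g\<in>H \<Longrightarrow> h\<in>H \<Longrightarrow> ip (\<lambda>t. f t + g t) h = ip f h + ip g h"
    and ip_scl: "\<And>c f g. f\<in>H \<Longrightarrow> g\<in>H \<Longrightarrow> ip (\<lambda>t. c * f t) g = c * ip f g"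
    and ip_cnj: "\<And>f g. f\<in>H \<Longrightarrow> g\<in>H \<Longrightarrow> ip g f = cnj (ip f g)"
    and ip_pos: "\<And>f. f\<in>H \<Longrightarrow> 0 \<le> Re (ip f f)"
    and ip_def: "\<And>f. f\<in>H \<Longrightarrow> ip f f = 0 \<Longrightarrow> f = (\<lambda>t. 0)"
begin

definition nsq where "nsq f = Re (ip f f)"

lemma sub: "f\<in>H \<Longrightarrow> g\<in>H \<Longrightarrow> (\<lambda>t. f t - g t) \<in> H"
proof -
  assume "f\<in>H" "g\<in>H"
  then have "(\<lambda>t. f t + (\<lambda>t. (-1) * g t) t) \<in> H" using add scl by blast
  then show ?thesis by simp
qed

lemma addt: "f\<in>H \<Longrightarrow> g\<in>H \<Longrightarrow> (\<lambda>t. f t + c * g t) \<in> H"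
  using add[of f "\<lambda>t. c * g t"] scl by blast

lemma ip_sub: "f\<in>H \<Longrightarrow> g\<in>H \<Longrightarrow> h\<in>H \<Longrightarrow> ip (\<lambda>t. f t - g t) h = ip f h - ip g h"
proof -
  assume a: "f\<in>H" "g\<in>H" "h\<in>H"
  have "ip (\<lambda>t. f t + (\<lambda>t. (-1) * g t) t) h = ip f h + ip (\<lambda>t. (-1) * g t) h"
    using a scl ip_add by blast
  then show ?thesis using ip_scl[OF a(2,3), of "-1"] by simp
qed

lemma ip_addt: "f\<in>H \<Longrightarrow> g\<in>H \<Longrightarrow> h\<in>H \<Longrightarrow> ip (\<lambda>t. f t + c * g t) h = ip f h + c * ip g h"
  using ip_add[of f "\<lambda>t. c * g t" h] scl ip_scl by simp

lemma ip_zero: "g\<in>H \<Longrightarrow> ip (\<lambda>t. 0) g = 0"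
  using ip_scl[of g g 0] by simp

lemma ip_zero_r: "g\<in>H \<Longrightarrow> ip g (\<lambda>t. 0) = 0"
  using ip_cnj[of g "\<lambda>t. 0"] zero ip_zero by simp

lemma ip_add_r: "f\<in>H \<Longrightarrow> g\<in>H \<Longrightarrow> h\<in>H \<Longrightarrow> ip h (\<lambda>t. f t + g t) = ip h f + ip h g"
proof -
  assume a: "f\<in>H" "g\<in>H" "h\<in>H"
  have "ip h (\<lambda>t. f t + g t) = cnj (ip (\<lambda>t. f t + g t) h)" using ip_cnj[OF add[OF a(1,2)] a(3)] .
  then show ?thesis using ip_add[OF a] ip_cnj[OF a(1,3)] ip_cnj[OF a(2,3)] by simp
qed

lemma ip_scl_r: "f\<in>H \<Longrightarrow> g\<in>H \<Longrightarrow> ip g (\<lambda>t. c * f t) = cnj c * ip g f"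
proof -
  assume a: "f\<in>H" "g\<in>H"
  have "ip g (\<lambda>t. c * f t) = cnj (ip (\<lambda>t. c * f t) g)" using ip_cnj[OF scl[OF a(1)] a(2)] .
  then show ?thesis using ip_scl[OF a] ip_cnj[OF a] by simp
qed

lemma ip_sub_r: "f\<in>H \<Longrightarrow> g\<in>H \<Longrightarrow> h\<in>H \<Longrightarrow> ip h (\<lambda>t. f t - g t) = ip h f - ip h g"
proof -
  assume a: "f\<in>H" "g\<in>H" "h\<in>H"
  have "ip h (\<lambda>t. f t - g t) = cnj (ip (\<lambda>t. f t - g t) h)" using ip_cnj[OF sub[OF a(1,2)] a(3)] .
  then show ?thesis using ip_sub[OF a] ip_cnj[OF a(1,3)] ip_cnj[OF a(2,3)] by simp
qed

lemma ip_addt_r: "f\<in>H \<Longrightarrow> g\<in>H \<Longrightarrow> h\<in>H \<Longrightarrow> ip h (\<lambda>t. f t + c * g t) = ip h f + cnj c * ip h g"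
  using ip_add_r[of f "\<lambda>t. c * g t" h] scl ip_scl_r by simp

lemma ip_self: "f\<in>H \<Longrightarrow> ip f f = complex_of_real (nsq f)"
  unfolding nsq_def using ip_cnj[of f f] by (metis Reals_cnj_iff complex_is_Real_iff of_real_Re)

lemma nsq_nonneg: "f\<in>H \<Longrightarrow> 0 \<le> nsq f"
  unfolding nsq_def using ip_pos by blast

lemma nsq_zero: "f\<in>H \<Longrightarrow> nsq f = 0 \<Longrightarrow> f = (\<lambda>t. 0)"
  using ip_self ip_def by force

lemma nsq_diff: "f\<in>H \<Longrightarrow> g\<in>H \<Longrightarrow> nsq (\<lambda>t. f t - g t) = nsq f + nsq g - 2 * Re (ip f g)"
proof -
  assume a: "f\<in>H" "g\<in>H"
  have "ip (\<lambda>t. f t - g t) (\<lambda>t. f t - g t) = ip f f - ip f g - ip g f + ip g g"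
    using a sub by (simp add: ip_sub ip_sub_r)
  moreover have "Re (ip g f) = Re (ip f g)" using ip_cnj[OF a] by simp
  ultimately show ?thesis unfolding nsq_def by simp
qed

lemma nsq_addt: "f\<in>H \<Longrightarrow> g\<in>H \<Longrightarrow> nsq (\<lambda>t. f t + complex_of_real s * g t) = nsq f + 2 * s * Re (ip f g) + s^2 * nsq g"
proof -
  assume a: "f\<in>H" "g\<in>H"
  have "ip (\<lambda>t. f t + complex_of_real s * g t) (\<lambda>t. f t + complex_of_real s * g t)
     = ip f f + s * ip f g + s * ip g f + s * s * ip g g"
    using a addt by (simp add: ip_addt ip_addt_r algebra_simps)
  moreover have "Re (ip g f) = Re (ip f g)" using ip_cnj[OF a] by simp
  ultimately show ?thesis unfolding nsq_def by (simp add: power2_eq_square)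
qed

lemma nsq_scl: "f\<in>H \<Longrightarrow> nsq (\<lambda>t. c * f t) = (cmod c)^2 * nsq f"
proof -
  assume a: "f\<in>H"
  have "ip (\<lambda>t. c * f t) (\<lambda>t. c * f t) = (c * cnj c) * ip f f"
    using a scl by (simp add: ip_scl ip_scl_r)
  also have "\<dots> = complex_of_real ((cmod c)^2 * nsq f)"
    using a by (simp add: complex_norm_square[symmetric] ip_self)
  finally show ?thesis unfolding nsq_def by simp
qed

lemma cauchy_schwarz: "f\<in>H \<Longrightarrow> g\<in>H \<Longrightarrow> (cmod (ip f g))^2 \<le> nsq f * nsq g"
proof -
  assume a: "f\<in>H" "g\<in>H"
  show ?thesis
  proof (cases "nsq g = 0")
    case True
    then have "g = (\<lambda>t. 0)" using nsq_zero a by blast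
    then show ?thesis using ip_zero_r a zero ip_zero unfolding nsq_def by simp
  next
    case False
    then have gp: "nsq g > 0" using nsq_nonneg a by force
    define c where "c = - ip f g / complex_of_real (nsq g)"
    have "ip (\<lambda>t. f t + c * g t) (\<lambda>t. f t + c * g t)
      = ip f f + cnj c * ip f g + c * ip g f + c * cnj c * ip g g"
      using a addt by (simp add: ip_addt ip_addt_r algebra_simps)
    also have "\<dots> = ip f f - ip f g * cnj (ip f g) / nsq g"
      using gp unfolding c_def ip_self[OF a(2)] ip_cnj[OF a]
      by (simp add: field_simps)
    finally have "0 \<le> Re (ip f f - ip f g * cnj (ip f g) / nsq g)"
      using ip_pos[OF addt[OF a]] by metis
    then have "0 \<le> nsq f - (cmod (ip f g))^2 / nsq g"
      unfolding complex_norm_square[symmetric] ip_self[OF a(1)] by simp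
    then show ?thesis using gp by (simp add: field_simps)
  qed
qed

end


lemma lin_diff: "(\<lambda>t. lin g c t - lin g d t) = lin g (\<lambda>i. c i - d i)"
  unfolding lin_def by (simp add: sum_subtractf left_diff_distrib)

lemma lin_addt: "(\<lambda>t. lin g c t + s * lin g d t) = lin g (\<lambda>i. c i + s * d i)"
  unfolding lin_def by (simp add: sum.distrib sum_distrib_left algebra_simps)

lemma lin_scl: "(\<lambda>t. s * lin g c t) = lin g (\<lambda>i. s * c i)"
  unfolding lin_def by (simp add: sum_distrib_left algebra_simps)

lemma lin_zero: "lin g (\<lambda>i. 0) = (\<lambda>t. 0)"
  unfolding lin_def by simp

context ipsp begin

lemma lin_in_gen: "finite S \<Longrightarrow> (\<forall>i. g i \<in> H) \<Longrightarrow> (\<lambda>t. \<Sum>i\<in>S. c i * g i t) \<in> H"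
proof (induction S rule: finite_induct)
  case empty then show ?case using zero by simp
next
  case (insert a S)
  have "(\<lambda>t. (\<lambda>t. \<Sum>i\<in>S. c i * g i t) t + c a * g a t) \<in> H"
    using insert addt by blast
  then show ?case using insert by (simp add: add.commute)
qed

lemma lin_in: "(\<forall>i. g i \<in> H) \<Longrightarrow> lin g c \<in> H"
  unfolding lin_def using lin_in_gen[of UNIV g c] by simp

lemma ip_lin_gen: "finite S \<Longrightarrow> (\<forall>i. g i \<in> H) \<Longrightarrow> w \<in> H \<Longrightarrow>
   ip (\<lambda>t. \<Sum>i\<in>S. c i * g i t) w = (\<Sum>i\<in>S. c i * ip (g i) w)"
proof (induction S rule: finite_induct)
  case empty then show ?case using ip_zero by simp
next
  case (insert a S)
  have "ip (\<lambda>t. (\<lambda>t. \<Sum>i\<in>S. c i * g i t) t + c a * g a t) w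
      = ip (\<lambda>t. \<Sum>i\<in>S. c i * g i t) w + c a * ip (g a) w"
    using insert lin_in_gen ip_addt by blast
  then show ?case using insert by (simp add: add.commute)
qed

lemma ip_lin: "(\<forall>i. g i \<in> H) \<Longrightarrow> w \<in> H \<Longrightarrow> ip (lin g c) w = (\<Sum>i\<in>UNIV. c i * ip (g i) w)"
  unfolding lin_def using ip_lin_gen[of UNIV g w c] by simp

lemma ip_lin_r: "(\<forall>i. g i \<in> H) \<Longrightarrow> w \<in> H \<Longrightarrow> ip w (lin g c) = (\<Sum>i\<in>UNIV. cnj (c i) * ip w (g i))"
proof -
  assume a: "\<forall>i. g i \<in> H" "w \<in> H"
  have "ip w (lin g c) = cnj (ip (lin g c) w)" using ip_cnj[OF lin_in[OF a(1)] a(2)] .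
  also have "\<dots> = (\<Sum>i\<in>UNIV. cnj (c i) * cnj (ip (g i) w))"
    using a by (simp add: ip_lin)
  also have "\<dots> = (\<Sum>i\<in>UNIV. cnj (c i) * ip w (g i))"
  proof -
    have "\<forall>i. ip w (g i) = cnj (ip (g i) w)" using ip_cnj a by blast
    then show ?thesis by simp
  qed
  finally show ?thesis .
qed

definition isproj where
  "isproj g f u \<longleftrightarrow> u \<in> fspan g \<and> (\<forall>j. ip (\<lambda>t. f t - u t) (g j) = 0)"

lemma isproj_orth:
  assumes g: "\<forall>i. g i \<in> H" and f: "f \<in> H" and p: "isproj g f u" and w: "w \<in> fspan g"
  shows "ip (\<lambda>t. f t - u t) w = 0" "ip w (\<lambda>t. f t - u t) = 0" "u \<in> H"
proof -
  obtain c where c: "u = lin g c" using p unfolding isproj_def fspan_lin by auto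
  obtain d where d: "w = lin g d" using w unfolding fspan_lin by auto
  show uH: "u \<in> H" using c lin_in g by simp
  show 1: "ip (\<lambda>t. f t - u t) w = 0"
    using p unfolding d isproj_def by (simp add: ip_lin_r g sub[OF f uH])
  show "ip w (\<lambda>t. f t - u t) = 0"
  proof -
    have wH: "w \<in> H" using d lin_in[OF g] by simp
    have "ip w (\<lambda>t. f t - u t) = cnj (ip (\<lambda>t. f t - u t) w)" by (rule ip_cnj[OF sub[OF f uH] wH])
    then show ?thesis using 1 by simp
  qed
qed

lemma hproj_eq:
  assumes g: "\<forall>i. g i \<in> H" and f: "f \<in> H" and p: "isproj g f u"
  shows "hproj ip (fspan g) f = u"
  unfolding hproj_def
proof (rule the_equality)
  show "u \<in> fspan g \<and> (\<forall>w\<in>fspan g. ip (\<lambda>t. f t - u t) w = 0)"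
    using p isproj_orth[OF g f p] unfolding isproj_def by blast
next
  fix u' assume u': "u' \<in> fspan g \<and> (\<forall>w\<in>fspan g. ip (\<lambda>t. f t - u' t) w = 0)"
  obtain c where c: "u = lin g c" using p unfolding isproj_def fspan_lin by auto
  obtain d where d: "u' = lin g d" using u' unfolding fspan_lin by auto
  have uH: "u \<in> H" "u' \<in> H" using c d lin_in g by auto
  define z where "z = (\<lambda>t. u t - u' t)"
  have zs: "z \<in> fspan g" unfolding z_def c d lin_diff fspan_lin by simp
  have zH: "z \<in> H" unfolding z_def using sub uH by simp
  have e2: "(\<lambda>t. (\<lambda>t. f t - u' t) t - (\<lambda>t. f t - u t) t) = z" unfolding z_def by (simp add: fun_eq_iff)
  have e1: "ip (\<lambda>t. (\<lambda>t. f t - u' t) t - (\<lambda>t. f t - u t) t) z = ip (\<lambda>t. f t - u' t) z - ip (\<lambda>t. f t - u t) z"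
    by (rule ip_sub[OF sub[OF f uH(2)] sub[OF f uH(1)] zH])
  have "ip z z = ip (\<lambda>t. f t - u' t) z - ip (\<lambda>t. f t - u t) z"
    using e1 unfolding e2 .
  also have "\<dots> = 0" using u' zs isproj_orth[OF g f p zs] by simp
  finally have "z = (\<lambda>t. 0)" using ip_def zH by blast
  then show "u' = u" unfolding z_def by (simp add: fun_eq_iff)
qed

lemma isproj_self: "\<forall>i. g i \<in> H \<Longrightarrow> u \<in> fspan g \<Longrightarrow> isproj g u u"
  unfolding isproj_def using ip_zero by simp

lemma pyth:
  assumes g: "\<forall>i. g i \<in> H" and f: "f \<in> H" and p: "isproj g f u"
  shows "nsq (\<lambda>t. f t - u t) = nsq f - nsq u" "ip f u = complex_of_real (nsq u)"
proof -
  have uH: "u \<in> H" using isproj_orth[OF g f p] p unfolding isproj_def by blast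
  have us: "u \<in> fspan g" using p isproj_def by blast
  have "ip f u = ip (\<lambda>t. (\<lambda>t. f t - u t) t + u t) u" by simp
  also have "\<dots> = ip (\<lambda>t. f t - u t) u + ip u u" using ip_add sub f uH by blast
  also have "\<dots> = ip u u" using isproj_orth(1)[OF g f p us] by simp
  finally show 1: "ip f u = complex_of_real (nsq u)" using ip_self uH by simp
  show "nsq (\<lambda>t. f t - u t) = nsq f - nsq u"
    using nsq_diff[OF f uH] 1 by simp
qed

end


locale setting = ipsp H ip for H :: "('x \<Rightarrow> complex) set" and ip +
  fixes K :: "'x \<Rightarrow> 'x \<Rightarrow> complex" and x :: "'n::finite \<Rightarrow> 'x" and e :: "'n \<Rightarrow> 'x \<Rightarrow> complex"
  assumes KH: "\<And>y. K y \<in> H"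
    and repr: "\<And>f y. f \<in> H \<Longrightarrow> f y = ip f (K y)"
    and eH: "\<And>k. e k \<in> H"
    and e_on: "\<And>j k. ip (e j) (e k) = (if j = k then 1 else 0)"
    and KXinv: "invertible (\<chi> j k. K (x j) (x k))"
begin

abbreviation "Kx \<equiv> (\<lambda>j. K (x j))"
definition "KXT = (\<chi> j k. K (x k) (x j))"
definition "EE = (\<chi> j k. e k (x j))"
definition "Es = cnj_transpose EE"
definition "PV f = lin e (\<lambda>k. ip f (e k))"
definition "PU f = lin Kx (\<lambda>i. (matrix_inv KXT *v (\<chi> j. ip f (Kx j)))$i)"
definition "uc c = lin Kx (\<lambda>i. c$i)"

lemma KxH: "\<forall>i. Kx i \<in> H" using KH by simp
lemma eH': "\<forall>i. e i \<in> H" using eH by simp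

lemma KXT_inv: "invertible KXT"
proof -
  have "KXT = transpose (\<chi> j k. K (x j) (x k))" unfolding KXT_def transpose_def by simp
  then show ?thesis using KXinv transpose_inv_field by metis
qed

lemma ip_KK: "ip (Kx i) (Kx j) = K (x i) (x j)"
  using repr[of "K (x i)" "x j"] KH by simp

lemma ip_eK: "ip (e k) (Kx i) = e k (x i)"
  using repr[of "e k" "x i"] eH by simp

lemma ip_Ke: "ip (Kx i) (e k) = cnj (e k (x i))"
  using ip_cnj[of "e k" "Kx i"] ip_eK eH KH by simp

lemma ip_lin_e: "ip (lin e d) (e k) = d k"
  using ip_lin[OF eH' eH] by (simp add: e_on if_distrib sum.delta cong: if_cong)

lemma ip_uc_K: "ip (uc c) (Kx j) = (KXT *v c)$j"
  unfolding uc_def using ip_lin[OF KxH KH]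
  by (simp add: ip_KK KXT_def matrix_vector_mult_def mult.commute)

lemma ip_uc_e: "ip (uc c) (e k) = (Es *v c)$k"
  unfolding uc_def using ip_lin[OF KxH eH]
  by (simp add: ip_Ke Es_def EE_def cnj_transpose_def matrix_vector_mult_def mult.commute)

lemma ip_lin_e_K: "ip (lin e d) (Kx j) = (EE *v (\<chi> k. d k))$j"
  using ip_lin[OF eH' KH] by (simp add: ip_eK EE_def matrix_vector_mult_def mult.commute)

lemma PV_proj: "f \<in> H \<Longrightarrow> isproj e f (PV f)"
  unfolding isproj_def PV_def
proof (intro conjI allI)
  show "lin e (\<lambda>k. ip f (e k)) \<in> fspan e" unfolding fspan_lin by simp
  fix j assume f: "f \<in> H"
  show "ip (\<lambda>t. f t - lin e (\<lambda>k. ip f (e k)) t) (e j) = 0"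
    using ip_sub[OF f lin_in[OF eH'] eH] ip_lin_e by simp
qed

lemma PU_proj: "f \<in> H \<Longrightarrow> isproj Kx f (PU f)"
  unfolding isproj_def
proof (intro conjI allI)
  show "PU f \<in> fspan Kx" unfolding fspan_lin PU_def by simp
  fix j assume f: "f \<in> H"
  have "PU f = uc (matrix_inv KXT *v (\<chi> j. ip f (Kx j)))" unfolding PU_def uc_def by simp
  then have "ip (PU f) (Kx j) = (KXT *v (matrix_inv KXT *v (\<chi> j. ip f (Kx j))))$j"
    using ip_uc_K by simp
  also have "\<dots> = ip f (Kx j)"
    by (simp add: matrix_vector_mul_assoc matrix_inv_props(1)[OF KXT_inv])
  finally show "ip (\<lambda>t. f t - PU f t) (Kx j) = 0"
    using ip_sub[OF f _ KH] lin_in[OF KxH] unfolding PU_def by simp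
qed

lemma PV_H: "PV f \<in> H" unfolding PV_def by (rule lin_in[OF eH'])
lemma PU_H: "PU f \<in> H" unfolding PU_def by (rule lin_in[OF KxH])
lemma uc_H: "uc c \<in> H" unfolding uc_def by (rule lin_in[OF KxH])

lemma hproj_V: "f \<in> H \<Longrightarrow> hproj ip (fspan e) f = PV f"
  using hproj_eq[OF eH' _ PV_proj] by blast
lemma hproj_U: "f \<in> H \<Longrightarrow> hproj ip (fspan Kx) f = PU f"
  using hproj_eq[OF KxH _ PU_proj] by blast

lemma U_uc: "u \<in> fspan Kx \<Longrightarrow> \<exists>c. u = uc c"
  unfolding fspan_lin uc_def
proof -
  assume "u \<in> range (lin Kx)"
  then obtain d where "u = lin Kx d" by auto
  then have "u = lin Kx (\<lambda>i. (vec_lambda d)$i)" by simp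
  then show "\<exists>c. u = lin Kx (\<lambda>i. c$i)" by blast
qed

lemma uc_U: "uc c \<in> fspan Kx" unfolding uc_def fspan_lin by simp

lemma PV_uc: "PV (uc c) = lin e (\<lambda>k. (Es *v c)$k)"
  unfolding PV_def ip_uc_e ..

lemma nsq_uc_cplx: "complex_of_real (nsq (uc c)) = (\<Sum>j\<in>UNIV. cnj (c$j) * (KXT *v c)$j)"
  using ip_self[OF uc_H, of c] ip_lin_r[OF KxH uc_H, of c "\<lambda>i. c$i"]
  unfolding uc_def[symmetric] ip_uc_K by (simp add: uc_def)

lemma nsq_PVuc_cplx: "complex_of_real (nsq (PV (uc c))) = (\<Sum>j\<in>UNIV. cnj (c$j) * ((EE ** Es) *v c)$j)"
proof -
  have "ip (uc c) (PV (uc c)) = complex_of_real (nsq (PV (uc c)))"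
    using pyth(2)[OF eH' uc_H PV_proj[OF uc_H]] .
  then have "ip (PV (uc c)) (uc c) = complex_of_real (nsq (PV (uc c)))"
    using ip_cnj[OF uc_H PV_H] by simp
  moreover have "ip (PV (uc c)) (uc c) = (\<Sum>j\<in>UNIV. cnj (c$j) * ((EE ** Es) *v c)$j)"
    unfolding uc_def ip_lin_r[OF KxH PV_H]
    unfolding uc_def[symmetric] PV_uc ip_lin_e_K
    by (simp add: matrix_vector_mul_assoc[symmetric])
  ultimately show ?thesis by simp
qed

end


context setting begin

definition "gq c = nsq (uc c)"
definition "aq c = nsq (PV (uc c))"

lemma gq_formula: "gq c = Re (\<Sum>j\<in>UNIV. cnj (c$j) * (\<Sum>i\<in>UNIV. KXT$j$i * c$i))"
proof -
  have "gq c = Re (complex_of_real (gq c))" by simp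
  also have "\<dots> = Re (\<Sum>j\<in>UNIV. cnj (c$j) * (KXT *v c)$j)" unfolding gq_def nsq_uc_cplx ..
  also have "\<dots> = Re (\<Sum>j\<in>UNIV. cnj (c$j) * (\<Sum>i\<in>UNIV. KXT$j$i * c$i))"
    by (simp add: matrix_vector_mult_def)
  finally show ?thesis .
qed

lemma aq_formula: "aq c = Re (\<Sum>j\<in>UNIV. cnj (c$j) * (\<Sum>i\<in>UNIV. (EE ** Es)$j$i * c$i))"
proof -
  have "aq c = Re (complex_of_real (aq c))" by simp
  also have "\<dots> = Re (\<Sum>j\<in>UNIV. cnj (c$j) * ((EE ** Es) *v c)$j)" unfolding aq_def nsq_PVuc_cplx ..
  also have "\<dots> = Re (\<Sum>j\<in>UNIV. cnj (c$j) * (\<Sum>i\<in>UNIV. (EE ** Es)$j$i * c$i))"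
    by (simp add: matrix_vector_mult_def)
  finally show ?thesis .
qed

lemma gq_cont: "continuous_on S gq"
  unfolding gq_formula[abs_def] by (intro continuous_intros)

lemma aq_cont: "continuous_on S aq"
  unfolding aq_formula[abs_def] by (intro continuous_intros)

lemma gq_nonneg: "0 \<le> gq c" unfolding gq_def using nsq_nonneg uc_H by blast
lemma aq_nonneg: "0 \<le> aq c" unfolding aq_def using nsq_nonneg PV_H by blast

lemma gq_pos: "c \<noteq> 0 \<Longrightarrow> 0 < gq c"
proof (rule ccontr)
  assume c: "c \<noteq> 0" "\<not> 0 < gq c"
  then have "gq c = 0" using gq_nonneg[of c] by linarith
  then have z: "uc c = (\<lambda>t. 0)" using nsq_zero uc_H unfolding gq_def by blast
  have "(KXT *v c)$j = 0" for j
    using ip_uc_K[of c j] z ip_zero KH by metis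
  then have "KXT *v c = 0" by (simp add: vec_eq_iff)
  then show False using inv_ker[OF KXT_inv] c by blast
qed

lemma aq_zero: "aq c = 0 \<Longrightarrow> Es *v c = 0"
proof -
  assume "aq c = 0"
  then have z: "PV (uc c) = (\<lambda>t. 0)" using nsq_zero PV_H unfolding aq_def by blast
  have "(Es *v c)$k = 0" for k
    using ip_lin_e[of "\<lambda>k. (Es *v c)$k" k] z ip_zero eH unfolding PV_uc by metis
  then show "Es *v c = 0" by (simp add: vec_eq_iff)
qed

lemma comp_scaleR: "(r *\<^sub>R (c::complex^'n))$i = complex_of_real r * c$i"
  unfolding vector_scaleR_component by (simp add: scaleR_conv_of_real)

lemma uc_scale: "uc (r *\<^sub>R c) = (\<lambda>t. complex_of_real r * uc c t)"
  unfolding uc_def lin_scl comp_scaleR ..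

lemma PV_scale: "f \<in> H \<Longrightarrow> PV (\<lambda>t. s * f t) = (\<lambda>t. s * PV f t)"
  unfolding PV_def lin_scl by (simp add: ip_scl eH)

lemma gq_scale: "gq (r *\<^sub>R c) = r^2 * gq c"
  unfolding gq_def uc_scale using nsq_scl[OF uc_H] by simp

lemma aq_scale: "aq (r *\<^sub>R c) = r^2 * aq c"
  unfolding aq_def uc_scale PV_scale[OF uc_H] using nsq_scl[OF PV_H] by simp

lemma exists_min: "\<exists>c0. norm c0 = 1 \<and> (\<forall>c. norm c = 1 \<longrightarrow> aq c0 / gq c0 \<le> aq c / gq c)"
proof -
  have ne: "sphere (0::complex^'n) 1 \<noteq> {}"
    by simp
  have "continuous_on (sphere 0 1) (\<lambda>c. aq c / gq c)"
    by (intro continuous_intros aq_cont gq_cont) (auto intro!: gq_pos[THEN less_imp_neq, THEN not_sym])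
  from continuous_attains_inf[OF compact_sphere ne this] show ?thesis by auto
qed

definition "c0 = (SOME c0. norm c0 = 1 \<and> (\<forall>c. norm c = 1 \<longrightarrow> aq c0 / gq c0 \<le> aq c / gq c))"
definition "mu = aq c0 / gq c0"

lemma c0_props: "norm c0 = 1" "\<And>c. norm c = 1 \<Longrightarrow> mu \<le> aq c / gq c"
  using someI_ex[OF exists_min] unfolding c0_def[symmetric] mu_def by auto

lemma c0_nz: "c0 \<noteq> 0" using c0_props(1) by auto

lemma mu_nonneg: "0 \<le> mu" unfolding mu_def using aq_nonneg gq_nonneg by simp

lemma mu_le: "mu * gq c \<le> aq c"
proof (cases "c = 0")
  case True
  then have "gq c = 0" using gq_scale[of 0 c] by simp
  then show ?thesis using aq_nonneg by simp
next
  case False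
  define r where "r = 1 / norm c"
  have r: "r > 0" using False r_def by simp
  have "norm (r *\<^sub>R c) = 1" using False r_def by simp
  then have "mu \<le> aq (r *\<^sub>R c) / gq (r *\<^sub>R c)" by (rule c0_props(2))
  also have "\<dots> = aq c / gq c" using r by (simp add: aq_scale gq_scale)
  finally show ?thesis using gq_pos[OF False] by (simp add: field_simps)
qed

lemma mu_eq: "mu * gq c0 = aq c0"
  unfolding mu_def using gq_pos[OF c0_nz] by simp

end


lemma quad_zero:
  fixes a b :: real
  assumes "\<forall>s. 0 \<le> s * a + s^2 * b" shows "a = 0"
proof (rule ccontr)
  assume a: "a \<noteq> 0"
  define B where "B = abs b"
  have B: "B \<ge> 0" "b \<le> B" unfolding B_def by auto
  define s where "s = - a / (B + 1)"
  have d: "B + 1 > 0" using B by simp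
  have "s * a + s^2 * b \<le> s * a + s^2 * B"
    using B by (intro add_left_mono mult_left_mono) auto
  also have "\<dots> = (- (a^2) * (B + 1) + a^2 * B) / (B + 1)^2"
    unfolding s_def using d by (simp add: power2_eq_square add_divide_distrib diff_divide_distrib)
  also have "\<dots> = - (a^2) / ((B + 1)^2)" by (simp add: algebra_simps)
  also have "\<dots> < 0" using a d by simp
  finally have "s * a + s^2 * b < 0" .
  then show False using assms by (meson not_less)
qed

context setting begin

lemma uc_addt: "uc (a + r *\<^sub>R d) = (\<lambda>t. uc a t + complex_of_real r * uc d t)"
  unfolding uc_def lin_addt vector_add_component comp_scaleR ..

lemma uc_cscale: "uc (s *s d) = (\<lambda>t. s * uc d t)"
  unfolding uc_def lin_scl vector_smult_component ..

lemma PV_addt: "f \<in> H \<Longrightarrow> g \<in> H \<Longrightarrow> PV (\<lambda>t. f t + s * g t) = (\<lambda>t. PV f t + s * PV g t)"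
  unfolding PV_def lin_addt by (simp add: ip_addt eH)

lemma gq_addt: "gq (a + r *\<^sub>R d) = gq a + 2 * r * Re (ip (uc a) (uc d)) + r^2 * gq d"
  unfolding gq_def uc_addt using nsq_addt[OF uc_H uc_H] by simp

lemma aq_addt: "aq (a + r *\<^sub>R d) = aq a + 2 * r * Re (ip (PV (uc a)) (PV (uc d))) + r^2 * aq d"
  unfolding aq_def uc_addt PV_addt[OF uc_H uc_H] using nsq_addt[OF PV_H PV_H] by simp

lemma var_re: "Re (ip (PV (uc c0)) (PV (uc d))) = mu * Re (ip (uc c0) (uc d))"
proof -
  have "\<forall>s. 0 \<le> s * (2 * (Re (ip (PV (uc c0)) (PV (uc d))) - mu * Re (ip (uc c0) (uc d))))
               + s^2 * (aq d - mu * gq d)"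
  proof
    fix s
    have "mu * gq (c0 + s *\<^sub>R d) \<le> aq (c0 + s *\<^sub>R d)" by (rule mu_le)
    then show "0 \<le> s * (2 * (Re (ip (PV (uc c0)) (PV (uc d))) - mu * Re (ip (uc c0) (uc d))))
               + s^2 * (aq d - mu * gq d)"
      unfolding gq_addt aq_addt using mu_eq by (simp add: algebra_simps)
  qed
  from quad_zero[OF this] show ?thesis by simp
qed

lemma var_eq: "ip (PV (uc c0)) (PV (uc d)) = mu * ip (uc c0) (uc d)"
proof (rule complex_eqI)
  show "Re (ip (PV (uc c0)) (PV (uc d))) = Re (mu * ip (uc c0) (uc d))"
    using var_re by simp
  have "Re (ip (PV (uc c0)) (PV (uc (\<i> *s d)))) = mu * Re (ip (uc c0) (uc (\<i> *s d)))"
    by (rule var_re)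
  then show "Im (ip (PV (uc c0)) (PV (uc d))) = Im (mu * ip (uc c0) (uc d))"
    unfolding uc_cscale PV_scale[OF uc_H] by (simp add: ip_scl_r uc_H PV_H)
qed

lemma uc_axis: "uc (axis j 1) = Kx j"
proof -
  have "\<And>i t. (axis j 1)$i * Kx i t = (if i = j then Kx j t else 0)"
    unfolding axis_def by simp
  then show ?thesis unfolding uc_def lin_def by (simp add: fun_eq_iff)
qed

lemma gen_eig: "(EE ** Es) *v c0 = complex_of_real mu *s (KXT *v c0)"
proof -
  have "((EE ** Es) *v c0)$j = mu * (KXT *v c0)$j" for j
  proof -
    have orth: "ip (PV (uc c0)) (\<lambda>t. Kx j t - PV (Kx j) t) = 0"
    proof -
      have "PV (uc c0) \<in> fspan e" unfolding PV_def fspan_lin by simp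
      from isproj_orth(2)[OF eH' KH PV_proj[OF KH] this] show ?thesis .
    qed
    have "ip (PV (uc c0)) (PV (Kx j)) = ip (PV (uc c0)) (Kx j)"
      using orth ip_sub_r[OF KH PV_H PV_H] by simp
    also have "\<dots> = ((EE ** Es) *v c0)$j"
      unfolding PV_uc ip_lin_e_K by (simp add: matrix_vector_mul_assoc[symmetric])
    finally have 1: "ip (PV (uc c0)) (PV (Kx j)) = ((EE ** Es) *v c0)$j" .
    have "ip (PV (uc c0)) (PV (Kx j)) = mu * ip (uc c0) (Kx j)"
      using var_eq[of "axis j 1"] unfolding uc_axis .
    then show ?thesis using 1 ip_uc_K by simp
  qed
  then show ?thesis by (simp add: vec_eq_iff)
qed

end

locale setting2 = setting +
  assumes Einv: "invertible EE"
begin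

lemma Es_inv: "invertible Es" unfolding Es_def using cnj_transpose_inv Einv by blast
lemma A_inv: "invertible (EE ** Es)" using invertible_mult Einv Es_inv by blast

definition "Mx = KXT ** matrix_inv (EE ** Es)"

lemma mu_pos: "0 < mu"
proof -
  have "(EE ** Es) *v c0 \<noteq> 0" using inv_ker[OF A_inv] c0_nz by blast
  then have "mu \<noteq> 0" using gen_eig by auto
  then show ?thesis using mu_nonneg by simp
qed

lemma eig_exists: "\<exists>v. v \<noteq> 0 \<and> Mx *v v = complex_of_real (1/mu) *s v"
proof (intro exI conjI)
  let ?v = "(EE ** Es) *v c0"
  show "?v \<noteq> 0" using inv_ker[OF A_inv] c0_nz by blast
  have "Mx *v ?v = KXT *v (matrix_inv (EE ** Es) *v ((EE ** Es) *v c0))"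
    unfolding Mx_def by (rule matrix_vector_mul_assoc[symmetric])
  also have "\<dots> = KXT *v c0"
    by (simp only: matrix_vector_mul_assoc matrix_inv_props(2)[OF A_inv] matrix_vector_mul_lid)
  also have "\<dots> = complex_of_real (1/mu) *s ?v"
    using mu_pos by (simp add: gen_eig)
  finally show "Mx *v ?v = complex_of_real (1/mu) *s ?v" .
qed

lemma eig_bound:
  assumes v: "v \<noteq> 0" "Mx *v v = complex_of_real r *s v"
  shows "r \<le> 1/mu"
proof -
  define c where "c = matrix_inv (EE ** Es) *v v"
  have Ac: "(EE ** Es) *v c = v"
    unfolding c_def by (simp add: matrix_vector_mul_assoc matrix_inv_props(1)[OF A_inv])
  have cnz: "c \<noteq> 0" using Ac v by auto
  have Kc: "KXT *v c = complex_of_real r *s ((EE ** Es) *v c)"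
    using v(2) unfolding Ac unfolding Mx_def c_def by (simp add: matrix_vector_mul_assoc)
  have "complex_of_real (gq c) = complex_of_real r * complex_of_real (aq c)"
    unfolding gq_def aq_def nsq_uc_cplx nsq_PVuc_cplx Kc
    by (simp add: sum_distrib_left algebra_simps)
  then have g: "gq c = r * aq c" by (metis of_real_eq_iff of_real_mult)
  have "aq c \<noteq> 0"
  proof
    assume "aq c = 0"
    then have "Es *v c = 0" by (rule aq_zero)
    then show False using inv_ker[OF Es_inv] cnz by blast
  qed
  then have ap: "aq c > 0" using aq_nonneg by (simp add: less_le)
  have "mu * (r * aq c) \<le> aq c" using mu_le[of c] g by simp
  then have "mu * r \<le> 1" using ap by (simp add: algebra_simps mult_le_cancel_right1)
  then show ?thesis using mu_pos by (simp add: field_simps)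
qed

lemma lambda_max_eq: "lambda_max Mx = 1/mu"
proof -
  have Minv: "invertible Mx" unfolding Mx_def
    using invertible_mult KXT_inv invertible_matrix_inv A_inv by blast
  show ?thesis unfolding lambda_max_def
    apply (rule Max_eqI)
    using eig_finite[OF Minv] eig_exists eig_bound by auto
qed

end


context setting begin

lemma PU_self: "u \<in> fspan Kx \<Longrightarrow> PU u = u"
proof -
  assume u: "u \<in> fspan Kx"
  then obtain c where c: "u = uc c" using U_uc by blast
  then have uH: "u \<in> H" using uc_H by simp
  have "hproj ip (fspan Kx) u = u" using hproj_eq[OF KxH uH isproj_self[OF KxH u]] .
  then show ?thesis using hproj_U[OF uH] by simp
qed

lemma nsq_PU_le: "f \<in> H \<Longrightarrow> nsq (PU f) \<le> nsq f"
  using pyth(1)[OF KxH _ PU_proj] nsq_nonneg sub PU_H by (metis diff_ge_0_iff_ge)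
lemma nsq_PV_le: "f \<in> H \<Longrightarrow> nsq (PV f) \<le> nsq f"
  using pyth(1)[OF eH' _ PV_proj] nsq_nonneg sub PV_H by (metis diff_ge_0_iff_ge)

lemma nsq_diff_le: "a \<in> H \<Longrightarrow> b \<in> H \<Longrightarrow> nsq (\<lambda>t. a t - b t) \<le> 2 * nsq a + 2 * nsq b"
proof -
  assume a: "a \<in> H" "b \<in> H"
  have "0 \<le> nsq (\<lambda>t. a t + complex_of_real 1 * b t)" using nsq_nonneg addt a by blast
  then show ?thesis using nsq_addt[OF a, of 1] nsq_diff[OF a] by simp
qed

lemma dist_bdd: "f \<in> H \<Longrightarrow> nsq f \<le> 1 \<Longrightarrow> nsq (\<lambda>t. PU f t - PV f t) \<le> 4"
  using nsq_diff_le[OF PU_H PV_H, of f f] nsq_PU_le nsq_PV_le by fastforce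

definition "Dset = {hnorm ip (\<lambda>t. hproj ip (fspan Kx) f t - hproj ip (fspan e) f t) | f. f \<in> H \<and> hnorm ip f \<le> 1}"

lemma Dset_alt: "Dset = {sqrt (nsq (\<lambda>t. PU f t - PV f t)) | f. f \<in> H \<and> nsq f \<le> 1}"
proof -
  have eq1: "\<And>f. f \<in> H \<Longrightarrow> hnorm ip (\<lambda>t. hproj ip (fspan Kx) f t - hproj ip (fspan e) f t)
       = sqrt (nsq (\<lambda>t. PU f t - PV f t))"
    unfolding hnorm_def nsq_def by (simp add: hproj_U hproj_V)
  have eq2: "\<And>f. hnorm ip f \<le> 1 \<longleftrightarrow> nsq f \<le> 1"
    unfolding hnorm_def nsq_def by simp
  note eqs = eq1 eq2
  show ?thesis unfolding Dset_def
  proof (rule set_eqI, rule iffI)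
    fix y assume "y \<in> {hnorm ip (\<lambda>t. hproj ip (fspan Kx) f t - hproj ip (fspan e) f t) | f. f \<in> H \<and> hnorm ip f \<le> 1}"
    then obtain f where "f \<in> H" "hnorm ip f \<le> 1" "y = hnorm ip (\<lambda>t. hproj ip (fspan Kx) f t - hproj ip (fspan e) f t)" by blast
    then show "y \<in> {sqrt (nsq (\<lambda>t. PU f t - PV f t)) | f. f \<in> H \<and> nsq f \<le> 1}"
      using eqs by auto
  next
    fix y assume "y \<in> {sqrt (nsq (\<lambda>t. PU f t - PV f t)) | f. f \<in> H \<and> nsq f \<le> 1}"
    then obtain f where f: "f \<in> H" "nsq f \<le> 1" "y = sqrt (nsq (\<lambda>t. PU f t - PV f t))" by blast
    then have "y = hnorm ip (\<lambda>t. hproj ip (fspan Kx) f t - hproj ip (fspan e) f t)" "hnorm ip f \<le> 1"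
      using eqs by auto
    then show "y \<in> {hnorm ip (\<lambda>t. hproj ip (fspan Kx) f t - hproj ip (fspan e) f t) | f. f \<in> H \<and> hnorm ip f \<le> 1}"
      using f(1) by blast
  qed
qed

lemma Dset_bdd: "bdd_above Dset"
  unfolding Dset_alt bdd_above_def
  by (rule exI[of _ 2]) (auto intro!: real_le_lsqrt dist_bdd)

lemma singular_case:
  assumes "\<not> invertible EE"
  shows "Sup Dset \<ge> 1"
proof -
  have "\<not> invertible Es" unfolding Es_def using cnj_transpose_noninv assms by blast
  then obtain c where c: "c \<noteq> 0" "Es *v c = 0" using noninv_ker by blast
  have gp: "gq c > 0" using gq_pos c by blast
  define r where "r = 1 / sqrt (gq c)"
  define f where "f = uc (r *\<^sub>R c)"
  have fH: "f \<in> H" unfolding f_def using uc_H .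
  have r2: "r^2 * gq c = 1" unfolding r_def using gp by (simp add: power_divide)
  have nf: "nsq f = 1" unfolding f_def using gq_scale[of r c] r2 unfolding gq_def by simp
  have pu: "PU f = f" unfolding f_def using PU_self uc_U by blast
  have "PV (uc c) = (\<lambda>t. 0)" unfolding PV_uc c(2) lin_def by simp
  then have pv: "PV f = (\<lambda>t. 0)" unfolding f_def uc_scale PV_scale[OF uc_H] by simp
  have "sqrt (nsq (\<lambda>t. PU f t - PV f t)) \<in> Dset" unfolding Dset_alt using fH nf by auto
  moreover have "sqrt (nsq (\<lambda>t. PU f t - PV f t)) = 1" unfolding pu pv using nf by simp
  ultimately show ?thesis using cSup_upper[OF _ Dset_bdd] by metis
qed

end

context setting2 begin

lemma mu_le1: "mu \<le> 1"
proof -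
  have "nsq (\<lambda>t. uc c0 t - PV (uc c0) t) = gq c0 - aq c0"
    using pyth(1)[OF eH' uc_H PV_proj[OF uc_H]] unfolding gq_def aq_def .
  then have "aq c0 \<le> gq c0" using nsq_nonneg[OF sub[OF uc_H PV_H]] by (metis diff_ge_0_iff_ge)
  then show ?thesis unfolding mu_def using gq_pos[OF c0_nz] by simp
qed

lemma factU: "u \<in> fspan Kx \<Longrightarrow> nsq (\<lambda>t. u t - PV u t) \<le> (1 - mu) * nsq u"
proof -
  assume "u \<in> fspan Kx"
  then obtain c where c: "u = uc c" using U_uc by blast
  have "nsq (\<lambda>t. u t - PV u t) = gq c - aq c"
    using pyth(1)[OF eH' uc_H PV_proj[OF uc_H]] unfolding gq_def aq_def c .
  then show ?thesis using mu_le[of c] unfolding c gq_def by (simp add: algebra_simps)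
qed

lemma factV: "v \<in> fspan e \<Longrightarrow> nsq (\<lambda>t. v t - PU v t) \<le> (1 - mu) * nsq v"
proof -
  assume "v \<in> fspan e"
  then obtain d where d: "v = lin e d" unfolding fspan_lin by auto
  have vH: "v \<in> H" using d lin_in eH' by simp
  define c where "c = matrix_inv Es *v (\<chi> k. d k)"
  have "Es *v c = (\<chi> k. d k)"
    unfolding c_def by (simp add: matrix_vector_mul_assoc matrix_inv_props(1)[OF Es_inv])
  moreover have "(($) (\<chi> k. d k)) = d" by (simp add: fun_eq_iff)
  ultimately have pvu: "PV (uc c) = v" unfolding PV_uc d by simp
  let ?u = "uc c"
  have nv: "nsq v = aq c" unfolding aq_def pvu ..
  have nu: "nsq ?u = gq c" unfolding gq_def ..
  have "ip ?u (PV ?u) = complex_of_real (nsq (PV ?u))"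
    using pyth(2)[OF eH' uc_H PV_proj[OF uc_H]] .
  then have i1: "ip v ?u = complex_of_real (nsq v)"
    using ip_cnj[OF uc_H PV_H] pvu by (metis complex_cnj_complex_of_real)
  have "ip (\<lambda>t. v t - PU v t) ?u = 0"
    using isproj_orth(1)[OF KxH vH PU_proj[OF vH] uc_U] .
  then have "ip v ?u = ip (PU v) ?u" using ip_sub[OF vH PU_H uc_H] by simp
  then have "ip (PU v) ?u = complex_of_real (nsq v)" using i1 by simp
  then have "cmod (ip (PU v) ?u) = nsq v" using nsq_nonneg[OF vH] by simp
  then have "(nsq v)^2 \<le> nsq (PU v) * nsq ?u"
    using cauchy_schwarz[OF PU_H uc_H, of v c] by simp
  then have cs: "nsq v * nsq v \<le> nsq (PU v) * gq c" using nu by (simp add: power2_eq_square)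
  have mg: "mu * gq c \<le> nsq v" using mu_le nv by simp
  have "mu * nsq v \<le> nsq (PU v)"
  proof (cases "nsq v = 0")
    case True then show ?thesis using nsq_nonneg PU_H by simp
  next
    case False
    then have vp: "nsq v > 0" using nsq_nonneg[OF vH] by simp
    have gp: "gq c > 0"
    proof (rule ccontr)
      assume "\<not> 0 < gq c"
      then have "gq c = 0" using gq_nonneg[of c] by linarith
      moreover have "0 < nsq v * nsq v" using mult_pos_pos[OF vp vp] .
      ultimately show False using cs by simp
    qed
    have "nsq v * (mu * gq c) \<le> nsq v * nsq v" using mg vp by (simp add: mult_left_mono)
    also have "\<dots> \<le> nsq (PU v) * gq c" by (rule cs)
    finally have "(mu * nsq v) * gq c \<le> nsq (PU v) * gq c" by (simp add: algebra_simps)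
    then show ?thesis using gp by simp
  qed
  moreover have "nsq (\<lambda>t. v t - PU v t) = nsq v - nsq (PU v)"
    using pyth(1)[OF KxH vH PU_proj[OF vH]] .
  ultimately show ?thesis by (simp add: algebra_simps)
qed

lemma upper: "f \<in> H \<Longrightarrow> nsq f \<le> 1 \<Longrightarrow> nsq (\<lambda>t. PU f t - PV f t) \<le> 1 - mu"
proof -
  assume fH: "f \<in> H" and f1: "nsq f \<le> 1"
  define a where "a = PU f"
  define b where "b = PV f"
  define b' where "b' = PU b"
  define p where "p = (\<lambda>t. a t - b' t)"
  define q where "q = (\<lambda>t. b t - b' t)"
  have aH: "a \<in> H" and bH: "b \<in> H" and b'H: "b' \<in> H" unfolding a_def b_def b'_def
    using PU_H PV_H by auto
  have pH: "p \<in> H" and qH: "q \<in> H" unfolding p_def q_def using sub aH bH b'H by auto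
  have bV: "b \<in> fspan e" unfolding b_def PV_def fspan_lin by simp
  have pU: "p \<in> fspan Kx" unfolding p_def a_def b'_def PU_def lin_diff fspan_lin by simp
  have ab: "(\<lambda>t. a t - b t) = (\<lambda>t. p t - q t)" unfolding p_def q_def by simp
  have qp: "ip q p = 0" unfolding q_def b'_def
    using isproj_orth(1)[OF KxH bH PU_proj[OF bH] pU] .
  then have pq: "ip p q = 0" using ip_cnj[OF qH pH] by simp
  have n1: "nsq (\<lambda>t. a t - b t) = nsq p + nsq q"
    unfolding ab using nsq_diff[OF pH qH] pq by simp
  have fbH: "(\<lambda>t. f t - b t) \<in> H" using sub fH bH by simp
  have "(\<lambda>t. (\<lambda>t. f t - b t) t - p t) = (\<lambda>t. (\<lambda>t. f t - a t) t - q t)"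
    unfolding p_def q_def by (simp add: fun_eq_iff)
  moreover have "ip (\<lambda>t. (\<lambda>t. f t - a t) t - q t) p = 0"
    using ip_sub[OF sub[OF fH aH] qH pH] qp
      isproj_orth(1)[OF KxH fH PU_proj[OF fH] pU] unfolding a_def by simp
  ultimately have "ip (\<lambda>t. (\<lambda>t. f t - b t) t - p t) p = 0" by simp
  then have "ip (\<lambda>t. f t - b t) p = ip p p" using ip_sub[OF fbH pH pH] by simp
  then have ipp: "ip (\<lambda>t. f t - b t) p = complex_of_real (nsq p)" using ip_self[OF pH] by simp
  define r where "r = PV p"
  have rH: "r \<in> H" unfolding r_def using PV_H .
  have rV: "r \<in> fspan e" unfolding r_def PV_def fspan_lin by simp
  have "ip (\<lambda>t. f t - b t) r = 0" unfolding b_def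
    using isproj_orth(1)[OF eH' fH PV_proj[OF fH] rV] .
  then have "ip (\<lambda>t. f t - b t) (\<lambda>t. p t - r t) = complex_of_real (nsq p)"
    using ip_sub_r[OF pH rH fbH] ipp by simp
  then have "(nsq p)^2 \<le> nsq (\<lambda>t. f t - b t) * nsq (\<lambda>t. p t - r t)"
    using cauchy_schwarz[OF fbH sub[OF pH rH]] nsq_nonneg[OF pH] by simp
  also have "\<dots> \<le> nsq (\<lambda>t. f t - b t) * ((1 - mu) * nsq p)"
    using factU[OF pU] nsq_nonneg[OF fbH] unfolding r_def by (simp add: mult_left_mono)
  finally have pp: "nsq p * nsq p \<le> ((1 - mu) * nsq (\<lambda>t. f t - b t)) * nsq p"
    by (simp add: power2_eq_square algebra_simps)
  have np: "nsq p \<le> (1 - mu) * nsq (\<lambda>t. f t - b t)"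
  proof (cases "nsq p = 0")
    case True then show ?thesis using mu_le1 nsq_nonneg[OF fbH] by simp
  next
    case False
    then have "nsq p > 0" using nsq_nonneg[OF pH] by simp
    then show ?thesis using pp by simp
  qed
  have nq: "nsq q \<le> (1 - mu) * nsq b" unfolding q_def b'_def using factV[OF bV] .
  have nfb: "nsq (\<lambda>t. f t - b t) = nsq f - nsq b"
    unfolding b_def using pyth(1)[OF eH' fH PV_proj[OF fH]] .
  have "nsq (\<lambda>t. a t - b t) \<le> (1 - mu) * nsq f"
    using n1 np nq nfb by (simp add: algebra_simps)
  also have "\<dots> \<le> 1 - mu" using f1 mu_le1 by (simp add: mult_left_le)
  finally show ?thesis unfolding a_def b_def .
qed

lemma lower: "sqrt (1 - mu) \<in> Dset"
proof -
  have gp: "gq c0 > 0" using gq_pos c0_nz by blast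
  define r where "r = 1 / sqrt (gq c0)"
  define f where "f = uc (r *\<^sub>R c0)"
  have fH: "f \<in> H" unfolding f_def using uc_H .
  have r2: "r^2 * gq c0 = 1" unfolding r_def using gp by (simp add: power_divide)
  have nf: "nsq f = 1" unfolding f_def using gq_scale[of r c0] r2 unfolding gq_def by simp
  have "aq (r *\<^sub>R c0) = r^2 * (mu * gq c0)" using aq_scale[of r c0] mu_eq by simp
  also have "\<dots> = mu" using r2 by (simp add: algebra_simps)
  finally have af: "nsq (PV f) = mu" unfolding f_def aq_def .
  have pu: "PU f = f" unfolding f_def using PU_self uc_U by blast
  have "nsq (\<lambda>t. PU f t - PV f t) = 1 - mu"
    unfolding pu using pyth(1)[OF eH' fH PV_proj[OF fH]] nf af by simp
  then show ?thesis unfolding Dset_alt using fH nf by (auto intro!: exI[of _ f])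
qed

lemma Sup_Dset: "Sup Dset = sqrt (1 - mu)"
proof (rule cSup_eq_maximum[OF lower])
  fix y assume "y \<in> Dset"
  then obtain f where "f \<in> H" "nsq f \<le> 1" "y = sqrt (nsq (\<lambda>t. PU f t - PV f t))"
    unfolding Dset_alt by auto
  then show "y \<le> sqrt (1 - mu)" using upper by simp
qed

end


theorem lemma4p2:
  fixes K :: "'x::metric_space \<Rightarrow> 'x \<Rightarrow> complex"
    and H :: "('x \<Rightarrow> complex) set"
    and ip :: "('x \<Rightarrow> complex) \<Rightarrow> ('x \<Rightarrow> complex) \<Rightarrow> complex"
    and \<Omega> :: "'x set" and M :: "'x measure"
    and e :: "'n::finite \<Rightarrow> 'x \<Rightarrow> complex" and lam :: "'n \<Rightarrow> real"
    and x :: "'n \<Rightarrow> 'x"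
    and f h :: "'n \<Rightarrow> 'x \<Rightarrow> complex"
    and KX A B E :: "complex^'n^'n"
  assumes rk: "rkhs H ip K"
    and cpt: "compact \<Omega>"
    and cont: "continuous_on (\<Omega> \<times> \<Omega>) (\<lambda>(s, t). K s t)"
    and M_space: "space M = \<Omega>"
    and M_sets: "sets M = sets (restrict_space borel \<Omega>)"
    and M_fin: "finite_measure M"
    and e_H: "\<And>k. e k \<in> H"
    and e_eig: "\<And>k. Top M K (e k) = (\<lambda>s. complex_of_real (lam k) * e k s)"
    and e_on: "\<And>j k. ip (e j) (e k) = (if j = k then 1 else 0)"
    and lam_pos: "\<And>k. lam k > 0"
    and lam_top: "\<And>g l k. g \<in> H \<Longrightarrow> g \<noteq> (\<lambda>s. 0) \<Longrightarrow> (\<forall>k'. ip g (e k') = 0)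
                    \<Longrightarrow> Top M K g = (\<lambda>s. complex_of_real l * g s) \<Longrightarrow> l \<le> lam k"
    and KX_def: "KX = (\<chi> j k. K (x j) (x k))"
    and KX_inv: "invertible KX"
    and f_def: "\<And>j. f j = (\<lambda>s. \<Sum>k\<in>UNIV. cnj (e k (x j)) * e k s)"
    and h_def: "\<And>j. h j = (\<lambda>s. K (x j) s - f j s)"
    and A_def: "A = (\<chi> j k. ip (f k) (f j))"
    and B_def: "B = (\<chi> j k. ip (h k) (h j))"
    and E_def: "E = (\<chi> j k. e k (x j))"
    and B_inv: "invertible B"
  shows "(invertible E \<longrightarrow>
           subdist H ip (fspan (\<lambda>j. K (x j))) (fspan e)
             = sqrt (1 - 1 / lambda_max (transpose KX ** matrix_inv (E ** cnj_transpose E))))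
       \<and> (\<not> invertible E \<longrightarrow> subdist H ip (fspan (\<lambda>j. K (x j))) (fspan e) \<ge> 1)"
  proof -
  have ax: "ipsp H ip" using rk unfolding rkhs_def ipsp_def by blast
  have st: "setting H ip K x e"
    unfolding setting_def setting_axioms_def
  proof (intro conjI allI impI ax)
    show "\<And>y. K y \<in> H" using rk unfolding rkhs_def by blast
    show "\<And>f y. f \<in> H \<Longrightarrow> f y = ip f (K y)" using rk unfolding rkhs_def by blast
    show "\<And>k. e k \<in> H" by (rule e_H)
    show "\<And>j k. ip (e j) (e k) = (if j = k then 1 else 0)" by (rule e_on)
    show "invertible (\<chi> j k. K (x j) (x k))" using KX_inv KX_def by simp
  qed
  interpret S: setting H ip K x e by (rule st)
  have sd: "subdist H ip (fspan (\<lambda>j. K (x j))) (fspan e) = Sup S.Dset"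
    unfolding subdist_def S.Dset_def ..
  have EE: "S.EE = E" unfolding S.EE_def E_def ..
  have KT: "transpose KX = S.KXT" unfolding S.KXT_def KX_def transpose_def by (simp add: vec_eq_iff)
  show ?thesis
  proof (intro conjI impI)
    assume Ei: "invertible E"
    interpret S2: setting2 H ip K x e
      by (unfold_locales) (simp add: EE Ei)
    have M: "transpose KX ** matrix_inv (E ** cnj_transpose E) = S2.Mx"
      unfolding S2.Mx_def S.Es_def EE KT ..
    show "subdist H ip (fspan (\<lambda>j. K (x j))) (fspan e)
             = sqrt (1 - 1 / lambda_max (transpose KX ** matrix_inv (E ** cnj_transpose E)))"
      unfolding sd M S2.lambda_max_eq S2.Sup_Dset by simp
  next
    assume "\<not> invertible E"
    then show "subdist H ip (fspan (\<lambda>j. K (x j))) (fspan e) \<ge> 1"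
      unfolding sd using S.singular_case EE by simp
  qed
qed

end
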